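(* Let $(\mathbf Y_i)_{i\in\mathbb N}$ be a $p$-dimensional stationary time series on a probability space on which, for each $m\in\mathbb N$, $\mathbf W_{1,m},\mathbf W_{2,m}$ are independent $p$-dimensional standard Brownian motions, such that the long-run covariance matrix $\Sigma=\mathrm{Cov}(\mathbf Y_1,\mathbf Y_1)+\sum_{i\ge2}\{\mathrm{Cov}(\mathbf Y_1,\mathbf Y_i)+\mathrm{Cov}(\mathbf Y_i,\mathbf Y_1)\}$ exists and is positive definite, and for some $0<\xi<\frac12$, $$\sup_{k>m}\frac{1}{(k-m)^\xi}\Big\|\sum_{i=m+1}^k\{\mathbf Y_i-\mathbb E(\mathbf Y_1)\}-\Sigma^{1/2}\mathbf W_{1,m}(k-m)\Big\|_2=O_{\mathbb P}(1),\quad\frac{1}{m^\xi}\Big\|\sum_{i=1}^m\{\mathbf Y_i-\mathbb E(\mathbf Y_1)\}-\Sigma^{1/2}\mathbf W_{2,m}(m)\Big\|_2=O_{\mathbb P}(1).$$ Let $\Sigma_m$ be invertible $p\times p$ random matrices with $\Sigma_m\to\Sigma$ in probability. For $k\ge m+1$ define $$\tilde D_m(k)=\max_{j\in\{m,\dots,k-1\}}\frac{j(k-j)}{m^{3/2}}\|\bar{\mathbf Y}_{1:j}-\bar{\mathbf Y}_{j+1:k}\|_{\Sigma^{-1}},\qquad D_m(k)=\max_{j\in\{m,\dots,k-1\}}\frac{j(k-j)}{m^{3/2}}\|\bar{\mathbf Y}_{1:j}-\bar{\mathbf Y}_{j+1:k}\|_{\Sigma_m^{-1}}.$$ Then for any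 $\eta>0$, $\sup_{k>m}(m/k)^{\frac32+\eta}|\tilde D_m(k)-D_m(k)|=o_{\mathbb P}(1)$ as $m\to\infty$.
   Context: $\bar{\mathbf Y}_{j:k}=\frac1{k-j+1}\sum_{i=j}^k\mathbf Y_i$. For $M$ positive definite, $\|\mathbf y\|_M=\sqrt{(\mathbf y^\top M\mathbf y)/p}$; $\|\cdot\|_2$ is the Euclidean norm; $\Sigma^{1/2}$ is the symmetric positive-definite square root. *)

theory Defs
  imports "HOL-Probability.Probability"
begin

section \<open>Matrix notions\<close>

definition pos_def_mat :: "real^'p^'p \<Rightarrow> bool" where
  "pos_def_mat A \<longleftrightarrow> transpose A = A \<and> (\<forall>x. x \<noteq> 0 \<longrightarrow> x \<bullet> (A *v x) > 0)"

text \<open>Symmetric positive-definite square root.\<close>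
definition mat_sqrt :: "real^'p^'p \<Rightarrow> real^'p^'p" where
  "mat_sqrt A = (THE R. pos_def_mat R \<and> R ** R = A)"

text \<open>Weighted norm: sqrt (y' M y / p).\<close>
definition wnorm :: "real^'p^'p \<Rightarrow> real^'p \<Rightarrow> real" where
  "wnorm A y = sqrt ((y \<bullet> (A *v y)) / real CARD('p))"

section \<open>Moments\<close>

definition vexp :: "'a measure \<Rightarrow> ('a \<Rightarrow> real^'p) \<Rightarrow> real^'p" where
  "vexp M X = (\<chi> a. integral\<^sup>L M (\<lambda>\<omega>. X \<omega> $ a))"

definition cov_mat :: "'a measure \<Rightarrow> ('a \<Rightarrow> real^'p) \<Rightarrow> ('a \<Rightarrow> real^'p) \<Rightarrow> real^'p^'p" where
  "cov_mat M X Z = (\<chi> a b. integral\<^sup>L M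
      (\<lambda>\<omega>. (X \<omega> $ a - vexp M X $ a) * (Z \<omega> $ b - vexp M Z $ b)))"

section \<open>Sample means\<close>

text \<open>bar Y_{j:k} = 1/(k-j+1) * sum_{i=j}^k Y_i\<close>
definition ybar :: "(nat \<Rightarrow> real^'p) \<Rightarrow> nat \<Rightarrow> nat \<Rightarrow> real^'p" where
  "ybar y j k = (1 / (real k - real j + 1)) *\<^sub>R (\<Sum>i=j..k. y i)"

text \<open>CUSUM-type detector max_{j=m..k-1} j(k-j)/m^{3/2} ||ybar_{1:j} - ybar_{j+1:k}||_A\<close>
definition detector :: "real^'p^'p \<Rightarrow> (nat \<Rightarrow> real^'p) \<Rightarrow> nat \<Rightarrow> nat \<Rightarrow> real" where
  "detector A y m k = Max ((\<lambda>j. real j * (real k - real j) / (real m powr (3/2))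
        * wnorm A (ybar y 1 j - ybar y (j+1) k)) ` {m..k-1})"

section \<open>Stochastic notions\<close>

text \<open>Strict stationarity of (Y_i)_{i>=1}.\<close>
definition strictly_stationary :: "'a measure \<Rightarrow> (nat \<Rightarrow> 'a \<Rightarrow> real^'p) \<Rightarrow> bool" where
  "strictly_stationary M Y \<longleftrightarrow> (\<forall>h.
     distr M (PiM UNIV (\<lambda>_. borel)) (\<lambda>\<omega> i. Y (Suc i + h) \<omega>)
   = distr M (PiM UNIV (\<lambda>_. borel)) (\<lambda>\<omega> i. Y (Suc i) \<omega>))"

text \<open>p-dimensional standard Brownian motion on [0,oo).\<close>
definition std_BM :: "'a measure \<Rightarrow> (real \<Rightarrow> 'a \<Rightarrow> real^'p) \<Rightarrow> bool" where
  "std_BM M W \<longleftrightarrow>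
     (\<forall>t. W t \<in> borel_measurable M) \<and>
     (\<forall>\<omega>\<in>space M. W 0 \<omega> = 0 \<and> continuous_on {0..} (\<lambda>t. W t \<omega>)) \<and>
     (\<forall>s t a. 0 \<le> s \<longrightarrow> s < t \<longrightarrow>
        distributed M lborel (\<lambda>\<omega>. (W t \<omega> - W s \<omega>) $ a) (normal_density 0 (sqrt (t - s)))) \<and>
     (\<forall>n (t::nat \<Rightarrow> real). 0 \<le> t 0 \<longrightarrow> (\<forall>k<n. t k < t (Suc k)) \<longrightarrow>
        prob_space.indep_vars M (\<lambda>_. borel)
          (\<lambda>(k, a) \<omega>. (W (t (Suc k)) \<omega> - W (t k) \<omega>) $ a) ({..<n} \<times> UNIV))"

text \<open>Tightness (O_P(1)) of a sequence of extended-real random quantities.\<close>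
definition bdd_in_prob :: "'a measure \<Rightarrow> (nat \<Rightarrow> 'a \<Rightarrow> ereal) \<Rightarrow> bool" where
  "bdd_in_prob M X \<longleftrightarrow> (\<forall>\<epsilon>>0. \<exists>C::real. \<exists>N. \<forall>m\<ge>N.
      measure M {\<omega>\<in>space M. X m \<omega> > ereal C} \<le> \<epsilon>)"

text \<open>o_P(1) for nonnegative extended-real random quantities.\<close>
definition small_in_prob :: "'a measure \<Rightarrow> (nat \<Rightarrow> 'a \<Rightarrow> ereal) \<Rightarrow> bool" where
  "small_in_prob M X \<longleftrightarrow> (\<forall>\<epsilon>>0.
      (\<lambda>m. measure M {\<omega>\<in>space M. X m \<omega> > ereal \<epsilon>}) \<longlonglongrightarrow> 0)"

text \<open>Convergence in probability of random matrices to a constant.\<close>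
definition conv_in_prob_mat :: "'a measure \<Rightarrow> (nat \<Rightarrow> 'a \<Rightarrow> real^'p^'p) \<Rightarrow> real^'p^'p \<Rightarrow> bool" where
  "conv_in_prob_mat M S L \<longleftrightarrow> (\<forall>\<epsilon>>0.
      (\<lambda>m. measure M {\<omega>\<in>space M. norm (S m \<omega> - L) > \<epsilon>}) \<longlonglongrightarrow> 0)"

end

theory Submission
  imports Defs
begin



lemma sqrt_nonneg_diff_aux:
  fixes x y :: real assumes "0 \<le> x" "0 \<le> y"
  shows "sqrt x - sqrt y \<le> sqrt \<bar>x - y\<bar>"
proof (cases "x \<le> y")
  case True
  have "sqrt x \<le> sqrt y" using True by (rule real_sqrt_le_mono)
  moreover have "0 \<le> sqrt \<bar>x - y\<bar>" by simp
  ultimately show ?thesis by linarith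
next
  case False
  have e: "(sqrt (x - y) + sqrt y)^2 = x + 2 * sqrt (x - y) * sqrt y"
    using False assms by (simp add: power2_sum)
  have "0 \<le> 2 * sqrt (x - y) * sqrt y" using False assms by simp
  then have "x \<le> (sqrt (x - y) + sqrt y)^2" using e by linarith
  then have "sqrt x \<le> sqrt ((sqrt (x - y) + sqrt y)^2)" by (rule real_sqrt_le_mono)
  also have "\<dots> = sqrt (x - y) + sqrt y" using False assms by simp
  finally show ?thesis using False by simp
qed

lemma sqrt_nonneg_diff: assumes "0 \<le> x" "0 \<le> y" shows "\<bar>sqrt x - sqrt y\<bar> \<le> sqrt \<bar>x - y\<bar>"
  using sqrt_nonneg_diff_aux[OF assms] sqrt_nonneg_diff_aux[OF assms(2,1)]
  by (simp add: abs_minus_commute abs_le_iff)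

lemma sqrt_add_le: assumes "0 \<le> x" "0 \<le> y" shows "sqrt x + sqrt y \<le> sqrt (2 * (x + y))"
proof -
  have "0 \<le> (sqrt x - sqrt y)^2" by simp
  then have "2 * sqrt x * sqrt y \<le> x + y" using assms by (simp add: power2_diff)
  then have "(sqrt x + sqrt y)^2 \<le> 2 * (x + y)"
    using assms by (simp add: power2_sum)
  then have "sqrt ((sqrt x + sqrt y)^2) \<le> sqrt (2 * (x + y))" by (rule real_sqrt_le_mono)
  then show ?thesis by simp
qed

lemma sqrt_diff_le: "\<bar>sqrt a - sqrt b\<bar> \<le> sqrt (2 * \<bar>a - b\<bar>)"
proof -
  have m: "sqrt \<bar>a - b\<bar> \<le> sqrt (2 * \<bar>a - b\<bar>)" by (rule real_sqrt_le_mono) simp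
  consider "0 \<le> a" "0 \<le> b" | "0 \<le> a" "b < 0" | "a < 0" "0 \<le> b" | "a < 0" "b < 0" by linarith
  then show ?thesis
  proof cases
    case 1 then show ?thesis using sqrt_nonneg_diff[of a b] m by linarith
  next
    case 2
    have "\<bar>sqrt a - sqrt b\<bar> = sqrt a + sqrt (-b)" using 2 by (simp add: real_sqrt_minus)
    also have "\<dots> \<le> sqrt (2 * (a + - b))" using 2 by (intro sqrt_add_le) auto
    finally show ?thesis using 2 by simp
  next
    case 3
    have "\<bar>sqrt a - sqrt b\<bar> = sqrt (-a) + sqrt b" using 3 by (simp add: real_sqrt_minus)
    also have "\<dots> \<le> sqrt (2 * (- a + b))" using 3 by (intro sqrt_add_le) auto
    finally show ?thesis using 3 by simp
  next
    case 4
    have "\<bar>sqrt a - sqrt b\<bar> = \<bar>sqrt (-a) - sqrt (-b)\<bar>" by (simp add: real_sqrt_minus)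
    also have "\<dots> \<le> sqrt \<bar>-a - -b\<bar>" using 4 by (intro sqrt_nonneg_diff) auto
    also have "\<dots> = sqrt \<bar>a - b\<bar>" by (simp add: abs_minus_commute)
    finally show ?thesis using m by linarith
  qed
qed





lemma mv_le: "norm (A *v x) \<le> onorm ((*v) A) * norm (x::real^'n)"
  for A :: "real^'n^'m"
  using onorm[OF matrix_vector_mul_bounded_linear[of A]] by simp

lemma onorm_mv_nonneg: "0 \<le> onorm ((*v) (A::real^'n^'m))"
  by (rule onorm_pos_le[OF matrix_vector_mul_bounded_linear])

lemma onorm_le_norm: "onorm ((*v) A) \<le> real CARD('m) * real CARD('n) * norm A"
  for A :: "real^'n^'m"
proof (rule onorm_le_matrix_component)
  fix i j
  have "\<bar>A $ i $ j\<bar> \<le> norm (A $ i)" by (rule component_le_norm_cart)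
  also have "\<dots> \<le> norm A" by (rule Finite_Cartesian_Product.norm_nth_le)
  finally show "\<bar>A $ i $ j\<bar> \<le> norm A" .
qed

lemma matrix_inv_props:
  fixes A :: "real^'n^'n"
  assumes "invertible A"
  shows "A ** matrix_inv A = mat 1" "matrix_inv A ** A = mat 1"
proof -
  have "\<exists>A'. A ** A' = mat 1 \<and> A' ** A = mat 1" using assms by (simp add: invertible_def)
  then have "A ** matrix_inv A = mat 1 \<and> matrix_inv A ** A = mat 1"
    unfolding matrix_inv_def by (rule someI_ex)
  then show "A ** matrix_inv A = mat 1" "matrix_inv A ** A = mat 1" by auto
qed

lemma pd_invertible:
  fixes S :: "real^'n^'n"
  assumes "pos_def_mat S" shows "invertible S"
proof -
  have "\<forall>x. S *v x = 0 \<longrightarrow> x = 0"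
  proof (intro allI impI)
    fix x assume "S *v x = 0"
    then show "x = 0" using assms unfolding pos_def_mat_def by force
  qed
  then show ?thesis
    by (simp add: invertible_left_inverse matrix_left_invertible_ker)
qed

lemma wnorm_diff:
  fixes S T :: "real^'p^'p" and v :: "real^'p"
  assumes S: "invertible S" and T: "invertible T"
    and a: "onorm ((*v) (matrix_inv S)) \<le> a" and d: "onorm ((*v) (T - S)) \<le> d"
    and ad: "a * d \<le> 1/2"
  shows "\<bar>wnorm (matrix_inv S) v - wnorm (matrix_inv T) v\<bar> \<le> 2 * a * sqrt d * norm v"
proof -
  define A where "A = matrix_inv S"
  define B where "B = matrix_inv T"
  define x where "x = B *v v"
  have a0: "0 \<le> a" using a onorm_mv_nonneg[of "matrix_inv S"] by linarith
  have d0: "0 \<le> d" using d onorm_mv_nonneg[of "T - S"] by linarith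
  have Tx: "T *v x = v" unfolding x_def B_def
    by (simp add: matrix_vector_mul_assoc matrix_inv_props[OF T])
  have ASx: "A *v (S *v x) = x" unfolding A_def
    by (simp add: matrix_vector_mul_assoc matrix_inv_props[OF S])
  have Sx: "S *v x = v - (T - S) *v x"
    using Tx by (simp add: matrix_vector_mult_diff_rdistrib)
  have nA: "norm (A *v y) \<le> a * norm y" for y
    using mv_le[of A y] a unfolding A_def[symmetric] by (meson mult_right_mono norm_ge_zero order_trans)
  have nD: "norm ((T - S) *v y) \<le> d * norm y" for y
    using mv_le[of "T - S" y] d by (meson mult_right_mono norm_ge_zero order_trans)
  have "norm x \<le> a * norm (S *v x)" using nA[of "S *v x"] ASx by simp
  also have "norm (S *v x) \<le> norm v + d * norm x"
    using Sx nD[of x] norm_triangle_ineq4[of v "(T - S) *v x"] by simp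
  finally have "norm x \<le> a * (norm v + d * norm x)"
    using a0 by (meson mult_left_mono order_trans)
  then have "norm x \<le> a * norm v + (a * d) * norm x" by (simp add: algebra_simps)
  also have "(a * d) * norm x \<le> 1/2 * norm x" by (rule mult_right_mono[OF ad norm_ge_zero])
  finally have nx: "norm x \<le> 2 * a * norm v" by simp
  have "(T - S) *v x = v - S *v x" using Sx by simp
  then have "A *v ((T - S) *v x) = A *v v - x"
    using ASx by (simp add: matrix_vector_mult_diff_distrib)
  then have "A *v v - x = A *v ((T - S) *v x)" by simp
  then have "norm (A *v v - x) \<le> a * (d * norm x)"
    using nA[of "(T - S) *v x"] nD[of x] a0 by (metis mult_left_mono order_trans)
  also have "\<dots> \<le> a * (d * (2 * a * norm v))"
    using nx a0 d0 by (simp add: mult_left_mono)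
  finally have nAx: "norm (A *v v - x) \<le> 2 * a\<^sup>2 * d * norm v"
    by (simp add: power2_eq_square algebra_simps)
  have p1: "1 \<le> real CARD('p)" by simp
  have "\<bar>(v \<bullet> (A *v v)) / real CARD('p) - (v \<bullet> x) / real CARD('p)\<bar>
        = \<bar>v \<bullet> (A *v v - x)\<bar> / real CARD('p)"
    by (simp add: inner_diff_right diff_divide_distrib[symmetric])
  also have "\<dots> \<le> \<bar>v \<bullet> (A *v v - x)\<bar> / 1"
    by (rule divide_left_mono) (use p1 in auto)
  also have "\<dots> \<le> norm v * norm (A *v v - x)" using Cauchy_Schwarz_ineq2[of v "A *v v - x"] by simp
  also have "\<dots> \<le> norm v * (2 * a\<^sup>2 * d * norm v)" using nAx by (simp add: mult_left_mono)
  finally have h: "\<bar>(v \<bullet> (A *v v)) / real CARD('p) - (v \<bullet> x) / real CARD('p)\<bar>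
       \<le> 2 * a\<^sup>2 * d * (norm v)\<^sup>2" by (simp add: power2_eq_square algebra_simps)
  have "\<bar>wnorm A v - wnorm B v\<bar> \<le> sqrt (2 * (2 * a\<^sup>2 * d * (norm v)\<^sup>2))"
    unfolding wnorm_def x_def[symmetric]
    using sqrt_diff_le[of "(v \<bullet> (A *v v)) / real CARD('p)" "(v \<bullet> x) / real CARD('p)"] h
    by (smt (verit) real_sqrt_le_mono)
  also have "sqrt (2 * (2 * a\<^sup>2 * d * (norm v)\<^sup>2)) = 2 * a * sqrt d * norm v"
    using a0 d0 by (simp add: real_sqrt_mult)
  finally show ?thesis unfolding A_def B_def .
qed




lemma max_img_diff:
  fixes f g :: "nat \<Rightarrow> real"
  assumes "finite J" "J \<noteq> {}" "\<And>j. j \<in> J \<Longrightarrow> \<bar>f j - g j\<bar> \<le> b"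
  shows "\<bar>Max (f ` J) - Max (g ` J)\<bar> \<le> b"
proof -
  have *: "Max (f ` J) \<le> Max (g ` J) + b" if "finite J" "J \<noteq> {}" "\<And>j. j \<in> J \<Longrightarrow> \<bar>f j - g j\<bar> \<le> b"
    for f g :: "nat \<Rightarrow> real"
  proof -
    have "Max (f ` J) \<in> f ` J" using that by (intro Max_in) auto
    then obtain j where j: "j \<in> J" "Max (f ` J) = f j" by auto
    have "g j \<le> Max (g ` J)" using that j by auto
    then show ?thesis using j that(3)[of j] by linarith
  qed
  have a: "Max (f ` J) \<le> Max (g ` J) + b" by (rule *) (use assms in auto)
  have b: "Max (g ` J) \<le> Max (f ` J) + b" by (rule *) (use assms in \<open>auto simp: abs_minus_commute\<close>)
  show ?thesis using a b by (simp add: abs_le_iff)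
qed

lemma ybar_identity:
  fixes y :: "nat \<Rightarrow> real^'p"
  assumes "1 \<le> j" "j < k"
  shows "(real j * (real k - real j)) *\<^sub>R (ybar y 1 j - ybar y (j+1) k)
     = real k *\<^sub>R (\<Sum>l=1..j. y l - \<mu>) - real j *\<^sub>R (\<Sum>l=1..k. y l - \<mu>)"
proof -
  define P where "P i = (\<Sum>l=1..i. y l)" for i
  have split: "P k = P j + (\<Sum>l=j+1..k. y l)"
    unfolding P_def using sum.ub_add_nat[of 1 j y "k - j"] assms by simp
  have T: "(\<Sum>l=1..i. y l - \<mu>) = P i - real i *\<^sub>R \<mu>" for i
    unfolding P_def by (simp add: sum_subtractf sum_constant_scaleR del: sum_constant)
  have y1: "ybar y 1 j = (1 / real j) *\<^sub>R P j" unfolding ybar_def P_def by simp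
  have y2: "ybar y (j+1) k = (1 / (real k - real j)) *\<^sub>R (P k - P j)"
    unfolding ybar_def using split assms by (simp add: of_nat_diff)
  have jk: "real k - real j \<noteq> 0" "real j \<noteq> 0" using assms by auto
  have "(real j * (real k - real j)) *\<^sub>R (ybar y 1 j - ybar y (j+1) k)
      = (real k - real j) *\<^sub>R P j - real j *\<^sub>R (P k - P j)"
    unfolding y1 y2 using jk by (simp add: scaleR_diff_right)
  also have "\<dots> = real k *\<^sub>R (P j - real j *\<^sub>R \<mu>) - real j *\<^sub>R (P k - real k *\<^sub>R \<mu>)"
    by (simp add: algebra_simps)
  finally show ?thesis unfolding T .
qed

lemma detector_diff:
  fixes y :: "nat \<Rightarrow> real^'p" and A B :: "real^'p^'p"
  assumes m1: "1 \<le> m" and mk: "m < k" and \<beta>: "0 \<le> \<beta>" and K: "0 \<le> K" and \<eta>: "0 < \<eta>"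
    and T: "\<And>i. m \<le> i \<Longrightarrow> norm (\<Sum>l=1..i. y l - \<mu>) \<le> K * real m powr (-\<eta>) * real i powr (1/2+\<eta>)"
    and W: "\<And>v. \<bar>wnorm A v - wnorm B v\<bar> \<le> \<beta> * norm v"
  shows "(real m / real k) powr (3/2+\<eta>) * \<bar>detector A y m k - detector B y m k\<bar> \<le> 2*K*\<beta>"
proof -
  define b where "b = \<beta> * (2 * K * real m powr (-\<eta>) * real k powr (3/2+\<eta>)) / real m powr (3/2)"
  define Tn where "Tn i = norm (\<Sum>l=1..i. y l - \<mu>)" for i
  have mpos: "0 < real m" using m1 by simp
  have kpos: "0 < real k" using m1 mk by simp
  have Tj: "Tn i \<le> K * real m powr (-\<eta>) * real k powr (1/2+\<eta>)" if "m \<le> i" "i \<le> k" for i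
  proof -
    have "real i powr (1/2+\<eta>) \<le> real k powr (1/2+\<eta>)"
      using that \<eta> m1 by (intro powr_mono2) auto
    then show ?thesis using T[OF that(1)] K unfolding Tn_def
      by (smt (verit) mult_left_mono mult_nonneg_nonneg powr_ge_zero)
  qed
  have "\<bar>f j - g j\<bar> \<le> b" if j: "j \<in> {m..k-1}" and
     f: "f = (\<lambda>j. real j * (real k - real j) / (real m powr (3/2)) * wnorm A (ybar y 1 j - ybar y (j+1) k))"
     and g: "g = (\<lambda>j. real j * (real k - real j) / (real m powr (3/2)) * wnorm B (ybar y 1 j - ybar y (j+1) k))"
     for j f g
  proof -
    define v where "v = ybar y 1 j - ybar y (j+1) k"
    have j1: "1 \<le> j" "j < k" "m \<le> j" using j m1 mk by auto
    have c0: "0 \<le> real j * (real k - real j)" using j1 by simp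
    have "f j - g j = real j * (real k - real j) / real m powr (3/2) * (wnorm A v - wnorm B v)"
      unfolding f g v_def by (simp add: right_diff_distrib)
    then have "\<bar>f j - g j\<bar> = real j * (real k - real j) / real m powr (3/2) * \<bar>wnorm A v - wnorm B v\<bar>"
      using c0 j1 by (simp add: abs_mult)
    also have "\<dots> \<le> real j * (real k - real j) / real m powr (3/2) * (\<beta> * norm v)"
      using W[of v] c0 by (intro mult_left_mono) auto
    also have "\<dots> = \<beta> * norm ((real j * (real k - real j)) *\<^sub>R v) / real m powr (3/2)"
      using c0 by simp
    also have "norm ((real j * (real k - real j)) *\<^sub>R v) \<le> real k * Tn j + real j * Tn k"
      unfolding v_def ybar_identity[OF j1(1,2), of y \<mu>] Tn_def
      by (rule order_trans[OF norm_triangle_ineq4]) simp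
    also have "real k * Tn j + real j * Tn k \<le> real k * (K * real m powr (-\<eta>) * real k powr (1/2+\<eta>))
          + real k * (K * real m powr (-\<eta>) * real k powr (1/2+\<eta>))"
    proof (rule add_mono)
      show "real k * Tn j \<le> real k * (K * real m powr (-\<eta>) * real k powr (1/2+\<eta>))"
        using Tj[of j] j1 by (intro mult_left_mono) auto
      have "real j * Tn k \<le> real k * Tn k"
        using j1 by (intro mult_right_mono) (auto simp: Tn_def)
      also have "\<dots> \<le> real k * (K * real m powr (-\<eta>) * real k powr (1/2+\<eta>))"
        using Tj[of k] j1 by (intro mult_left_mono) auto
      finally show "real j * Tn k \<le> real k * (K * real m powr (-\<eta>) * real k powr (1/2+\<eta>))" .
    qed
    also have "real k * (K * real m powr (-\<eta>) * real k powr (1/2+\<eta>))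
          + real k * (K * real m powr (-\<eta>) * real k powr (1/2+\<eta>))
          = 2 * K * real m powr (-\<eta>) * real k powr (3/2+\<eta>)"
    proof -
      have e: "(3/2+\<eta>) = 1 + (1/2+\<eta>)" by simp
      have "real k powr (3/2+\<eta>) = real k powr 1 * real k powr (1/2+\<eta>)" unfolding e by (rule powr_add)
      then have "real k * real k powr (1/2+\<eta>) = real k powr (3/2+\<eta>)"
        using kpos by simp
      then show ?thesis by (simp add: algebra_simps)
    qed
    finally show ?thesis unfolding b_def
      using \<beta> by (simp add: divide_right_mono mult_left_mono)
  qed
  then have D: "\<bar>detector A y m k - detector B y m k\<bar> \<le> b"
    unfolding detector_def using mk by (intro max_img_diff) auto
  have "(real m / real k) powr (3/2+\<eta>) * \<bar>detector A y m k - detector B y m k\<bar>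
       \<le> (real m / real k) powr (3/2+\<eta>) * b"
    using D by (intro mult_left_mono) auto
  also have "\<dots> = 2*K*\<beta>"
  proof -
    have e1: "(real m / real k) powr (3/2+\<eta>) = real m powr (3/2+\<eta>) / real k powr (3/2+\<eta>)"
      using mpos kpos by (simp add: powr_divide)
    have e2: "real m powr (3/2+\<eta>) = real m powr (3/2) * real m powr \<eta>"
      using mpos by (simp add: powr_add)
    have e3: "real m powr \<eta> * real m powr (-\<eta>) = 1"
      using mpos by (simp add: powr_add[symmetric])
    have "(real m / real k) powr (3/2+\<eta>) * b
       = 2*K*\<beta> * (real m powr \<eta> * real m powr (-\<eta>)) * (real m powr (3/2) / real m powr (3/2))
          * (real k powr (3/2+\<eta>) / real k powr (3/2+\<eta>))"
      unfolding b_def e1 e2 by (simp add: field_simps)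
    also have "\<dots> = 2*K*\<beta>" using e3 mpos kpos by simp
    finally show ?thesis .
  qed
  finally show ?thesis .
qed


lemma partial_bound:
  fixes y w1 :: "nat \<Rightarrow> real^'p" and w2 \<mu> :: "real^'p" and R :: "real^'p^'p"
  assumes m1: "1 \<le> m" and \<eta>: "0 < \<eta>" and \<xi>: "0 < \<xi>" "\<xi> < 1/2"
    and C: "0 \<le> C1" "0 \<le> C2" "0 \<le> CB1" "0 \<le> CB2"
    and h1: "\<And>k. m < k \<Longrightarrow> norm ((\<Sum>i=m+1..k. y i - \<mu>) - R *v w1 (k - m)) / real (k - m) powr \<xi> \<le> C1"
    and h2: "norm ((\<Sum>i=1..m. y i - \<mu>) - R *v w2) / real m powr \<xi> \<le> C2"
    and h3: "\<And>n. norm (w1 n) \<le> CB1 * real m powr (-\<eta>) * (real m + real n) powr (1/2+\<eta>)"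
    and h4: "norm w2 \<le> CB2 * real m powr (-\<eta>) * (real m + real m) powr (1/2+\<eta>)"
    and i: "m \<le> i"
  shows "norm (\<Sum>l=1..i. y l - \<mu>) \<le>
     (onorm ((*v) R) * CB2 * 2 powr (1/2+\<eta>) + C2 + onorm ((*v) R) * CB1 + C1)
        * real m powr (-\<eta>) * real i powr (1/2+\<eta>)"
proof -
  define \<theta> where "\<theta> = 1/2+\<eta>"
  define Q where "Q j = real m powr (-\<eta>) * real j powr \<theta>" for j
  define nR where "nR = onorm ((*v) R)"
  have nR0: "0 \<le> nR" unfolding nR_def by (rule onorm_mv_nonneg)
  have mpos: "0 < real m" using m1 by simp
  have Q0: "0 \<le> Q j" for j unfolding Q_def by simp
  have q1: "real j powr \<xi> \<le> Q j" if "m \<le> j" for j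
  proof -
    have jpos: "0 < real j" using that m1 by simp
    have "real j powr \<xi> \<le> real j powr (1/2)"
      using \<xi> that m1 by (intro powr_mono) auto
    also have "\<dots> = real j powr (-\<eta>) * real j powr \<theta>"
      unfolding \<theta>_def using jpos by (simp add: powr_add[symmetric])
    also have "\<dots> \<le> real m powr (-\<eta>) * real j powr \<theta>"
      using that mpos \<eta> by (intro mult_right_mono powr_mono2') auto
    finally show ?thesis unfolding Q_def .
  qed
  have q2: "Q m \<le> Q i"
    unfolding Q_def \<theta>_def using i \<eta> mpos by (intro mult_left_mono powr_mono2) auto
  have q3: "real m powr (-\<eta>) * (real m + real m) powr \<theta> = 2 powr \<theta> * Q m"
  proof -
    have "(real m + real m) powr \<theta> = 2 powr \<theta> * real m powr \<theta>"
      using mpos by (simp add: powr_mult[symmetric])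
    then show ?thesis unfolding Q_def by simp
  qed
  have Rb: "norm (R *v x) \<le> nR * norm x" for x unfolding nR_def by (rule mv_le)
  define Tm where "Tm = (\<Sum>l=1..m. y l - \<mu>)"
  have Tm: "norm Tm \<le> (nR * CB2 * 2 powr \<theta> + C2) * Q m"
  proof -
    have "norm Tm \<le> norm (R *v w2) + norm (Tm - R *v w2)"
      by (metis add.commute diff_add_cancel norm_triangle_ineq)
    also have "norm (R *v w2) \<le> nR * (CB2 * real m powr (-\<eta>) * (real m + real m) powr \<theta>)"
      using Rb[of w2] h4 nR0 unfolding \<theta>_def by (meson mult_left_mono order_trans)
    also have "\<dots> = nR * CB2 * 2 powr \<theta> * Q m" using q3 by simp
    also have "norm (Tm - R *v w2) \<le> C2 * real m powr \<xi>"
      using h2 mpos unfolding Tm_def by (simp add: divide_le_eq mult.commute)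
    also have "C2 * real m powr \<xi> \<le> C2 * Q m" using q1[of m] C by (intro mult_left_mono) auto
    finally show ?thesis by (simp add: algebra_simps)
  qed
  show ?thesis
  proof (cases "i = m")
    case True
    have "(nR * CB2 * 2 powr \<theta> + C2) * Q m \<le> (nR * CB2 * 2 powr \<theta> + C2 + nR * CB1 + C1) * Q m"
      by (intro mult_right_mono) (use nR0 C Q0 in auto)
    then have "norm Tm \<le> (nR * CB2 * 2 powr \<theta> + C2 + nR * CB1 + C1) * Q m" using Tm by linarith
    then show ?thesis using True unfolding Q_def \<theta>_def nR_def Tm_def by (simp add: mult.assoc)
  next
    case False
    then have mi: "m < i" using i by simp
    have split: "(\<Sum>l=1..i. y l - \<mu>) = Tm + (\<Sum>l=m+1..i. y l - \<mu>)"
      unfolding Tm_def using sum.ub_add_nat[of 1 m "\<lambda>l. y l - \<mu>" "i - m"] m1 mi by simp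
    define D where "D = (\<Sum>l=m+1..i. y l - \<mu>)"
    have "norm D \<le> norm (R *v w1 (i - m)) + norm (D - R *v w1 (i - m))"
      by (metis add.commute diff_add_cancel norm_triangle_ineq)
    also have "norm (R *v w1 (i - m)) \<le> nR * (CB1 * real m powr (-\<eta>) * (real m + real (i - m)) powr \<theta>)"
      using Rb[of "w1 (i - m)"] h3[of "i - m"] nR0 unfolding \<theta>_def by (meson mult_left_mono order_trans)
    also have "\<dots> = nR * CB1 * Q i" using mi unfolding Q_def by (simp add: of_nat_diff)
    also have "norm (D - R *v w1 (i - m)) \<le> C1 * real (i - m) powr \<xi>"
      using h1[OF mi] mi unfolding D_def by (simp add: divide_le_eq mult.commute)
    also have "C1 * real (i - m) powr \<xi> \<le> C1 * Q i"
    proof -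
      have "real (i - m) powr \<xi> \<le> real i powr \<xi>" using mi \<xi> by (intro powr_mono2) auto
      then show ?thesis using q1[OF i] C by (intro mult_left_mono) auto
    qed
    finally have Db: "norm D \<le> nR * CB1 * Q i + C1 * Q i" by simp
    have "norm (\<Sum>l=1..i. y l - \<mu>) \<le> norm Tm + norm D" unfolding split D_def by (rule norm_triangle_ineq)
    also have "\<dots> \<le> (nR * CB2 * 2 powr \<theta> + C2) * Q i + (nR * CB1 * Q i + C1 * Q i)"
    proof (rule add_mono[OF _ Db])
      have "0 \<le> nR * CB2 * 2 powr \<theta> + C2" using nR0 C by simp
      then show "norm Tm \<le> (nR * CB2 * 2 powr \<theta> + C2) * Q i"
        using Tm q2 by (meson mult_left_mono order_trans)
    qed
    finally show ?thesis unfolding Q_def \<theta>_def nR_def by (simp add: algebra_simps)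
  qed
qed




lemma normal_tail:
  fixes Z :: "'a \<Rightarrow> real"
  assumes P: "prob_space M" and D: "distributed M lborel Z (normal_density 0 \<sigma>)"
    and \<sigma>: "0 < \<sigma>" and c: "0 < c"
  shows "measure M {\<omega>\<in>space M. c < \<bar>Z \<omega>\<bar>} \<le> (fact (2*q) / ((2/\<sigma>\<^sup>2)^q * fact q)) / c^(2*q)"
proof -
  interpret prob_space M by (rule P)
  have Zm[measurable]: "Z \<in> borel_measurable M"
    using distributed_measurable[OF D] by simp
  have hb: "has_bochner_integral lborel (\<lambda>x. normal_density 0 \<sigma> x * x ^ (2*q))
           (fact (2 * q) / ((2 / \<sigma>\<^sup>2)^q * fact q))"
    using normal_moment_even[OF \<sigma>, of 0 q] by simp
  have nn: "\<And>x. x \<in> space lborel \<Longrightarrow> 0 \<le> normal_density 0 \<sigma> x" by (simp add: normal_density_nonneg)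
  have int: "integrable M (\<lambda>\<omega>. Z \<omega> ^ (2*q))"
    using distributed_integrable[OF D, of "\<lambda>x. x ^ (2*q)"] integrable.intros[OF hb] nn
    by simp
  have eq: "(\<integral>\<omega>. Z \<omega> ^ (2*q) \<partial>M) = fact (2 * q) / ((2 / \<sigma>\<^sup>2)^q * fact q)"
    using distributed_integral[OF D, of "\<lambda>x. x ^ (2*q)"] has_bochner_integral_integral_eq[OF hb] nn
    by simp
  have pos: "0 < c ^ (2*q)" using c by simp
  have "measure M {\<omega>\<in>space M. c < \<bar>Z \<omega>\<bar>} \<le> measure M {\<omega>\<in>space M. c ^ (2*q) \<le> Z \<omega> ^ (2*q)}"
  proof (rule finite_measure_mono)
    show "{\<omega>\<in>space M. c < \<bar>Z \<omega>\<bar>} \<subseteq> {\<omega>\<in>space M. c ^ (2*q) \<le> Z \<omega> ^ (2*q)}"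
    proof safe
      fix \<omega> assume "\<omega> \<in> space M" "c < \<bar>Z \<omega>\<bar>"
      then have "c ^ (2*q) \<le> \<bar>Z \<omega>\<bar> ^ (2*q)" using c by (intro power_mono) auto
      then show "c ^ (2*q) \<le> Z \<omega> ^ (2*q)" by (simp add: power_even_abs)
    qed
    show "{\<omega>\<in>space M. c ^ (2*q) \<le> Z \<omega> ^ (2*q)} \<in> sets M" by measurable
  qed
  also have "\<dots> \<le> (\<integral>\<omega>. Z \<omega> ^ (2*q) \<partial>M) / c ^ (2*q)"
    by (rule integral_Markov_inequality_measure[OF int, of "space M"]) (use pos in \<open>auto simp: power_mult\<close>)
  finally show ?thesis unfolding eq .
qed




lemma bm_chain:
  fixes X :: "nat \<Rightarrow> real"
  assumes "\<And>s i. s < L \<Longrightarrow> i < 2^(L-s) \<Longrightarrow> \<bar>X ((i+1)*2^s) - X (i*2^s)\<bar> \<le> lam s" and "n < 2^L"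
  shows "\<bar>X n - X 0\<bar> \<le> (\<Sum>s<L. lam s)"
  using assms
proof (induction L arbitrary: X n)
  case 0 then show ?case by simp
next
  case (Suc L)
  have b: "\<bar>X (2^L) - X 0\<bar> \<le> lam L" using Suc.prems(1)[of L 0] by simp
  have lamL: "0 \<le> lam L" using b by linarith
  show ?case
  proof (cases "n < 2^L")
    case True
    have "\<bar>X n - X 0\<bar> \<le> (\<Sum>s<L. lam s)"
    proof (rule Suc.IH)
      fix s i :: nat assume s: "s < L" "i < 2^(L-s)"
      have "i < 2^(Suc L - s)" using s by (simp add: Suc_diff_le)
      then show "\<bar>X ((i+1)*2^s) - X (i*2^s)\<bar> \<le> lam s" using Suc.prems(1)[of s i] s by simp
    qed (rule True)
    then show ?thesis using lamL by simp
  next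
    case False
    define Y where "Y k = X (2^L + k)" for k
    have "\<bar>Y (n - 2^L) - Y 0\<bar> \<le> (\<Sum>s<L. lam s)"
    proof (rule Suc.IH)
      fix s i :: nat assume s: "s < L" "i < 2^(L-s)"
      have e: "(2::nat)^L = 2^(L-s) * 2^s" using s by (simp add: power_add[symmetric])
      have y1: "Y ((i+1)*2^s) = X ((i + 2^(L-s) + 1)*2^s)" unfolding Y_def by (simp add: e algebra_simps)
      have y2: "Y (i*2^s) = X ((i + 2^(L-s))*2^s)" unfolding Y_def by (simp add: e algebra_simps)
      have "i + 2^(L-s) < 2^(Suc L - s)" using s by (simp add: Suc_diff_le)
      then show "\<bar>Y ((i+1)*2^s) - Y (i*2^s)\<bar> \<le> lam s"
        unfolding y1 y2 using Suc.prems(1)[of s "i + 2^(L-s)"] s by simp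
    next
      show "n - 2^L < 2^L" using Suc.prems(2) False by simp
    qed
    then have a: "\<bar>X n - X (2^L)\<bar> \<le> (\<Sum>s<L. lam s)" unfolding Y_def using False by simp
    have "\<bar>X n - X 0\<bar> \<le> \<bar>X n - X (2^L)\<bar> + \<bar>X (2^L) - X 0\<bar>" using abs_triangle_ineq[of "X n - X (2^L)" "X (2^L) - X 0"] by simp
    then show ?thesis using a b by simp
  qed
qed

lemma block_bound:
  fixes X :: "nat \<Rightarrow> real"
  assumes G: "\<bar>X (n div 2^L * 2^L)\<bar> \<le> G"
    and ch: "\<And>s i. s < L \<Longrightarrow> i < 2^(L-s) \<Longrightarrow>
       \<bar>X (n div 2^L * 2^L + (i+1)*2^s) - X (n div 2^L * 2^L + i*2^s)\<bar> \<le> lam s"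
  shows "\<bar>X n\<bar> \<le> G + (\<Sum>s<L. lam s)"
proof -
  define b where "b = n div 2^L * 2^L"
  define Y where "Y t = X (b + t)" for t
  have "\<bar>Y (n mod 2^L) - Y 0\<bar> \<le> (\<Sum>s<L. lam s)"
    by (rule bm_chain) (use ch in \<open>auto simp: Y_def b_def\<close>)
  moreover have "Y (n mod 2^L) = X n" unfolding Y_def b_def using div_mult_mod_eq[of n "2^L"] by simp
  moreover have "Y 0 = X b" unfolding Y_def by simp
  ultimately show ?thesis using G unfolding b_def by linarith
qed


lemma tail_incr:
  fixes W :: "real \<Rightarrow> 'a \<Rightarrow> real^'p"
  assumes P: "prob_space M" and BM: "std_BM M W" and t: "t0 < t1" and lam: "0 < lam"
  shows "measure M {\<omega>\<in>space M. lam < \<bar>W (real t1) \<omega> $ a - W (real t0) \<omega> $ a\<bar>}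
     \<le> (fact (2*q) / (2^q * fact q)) * (real t1 - real t0)^q / lam^(2*q)"
proof -
  define d where "d = real t1 - real t0"
  have d: "0 < d" using t unfolding d_def by simp
  have D: "distributed M lborel (\<lambda>\<omega>. (W (real t1) \<omega> - W (real t0) \<omega>) $ a) (normal_density 0 (sqrt d))"
    using BM t unfolding std_BM_def d_def by auto
  have "measure M {\<omega>\<in>space M. lam < \<bar>(W (real t1) \<omega> - W (real t0) \<omega>) $ a\<bar>}
     \<le> (fact (2*q) / ((2/(sqrt d)\<^sup>2)^q * fact q)) / lam^(2*q)"
    by (rule normal_tail[OF P D]) (use d lam in auto)
  also have "(fact (2*q) / ((2/(sqrt d)\<^sup>2)^q * fact q)) / lam^(2*q)
      = (fact (2*q) / (2^q * fact q)) * d^q / lam^(2*q)"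
    using d by (simp add: power_divide)
  finally show ?thesis unfolding d_def by simp
qed

lemma geo_rev:
  fixes x :: real assumes "0 \<le> x" "x < 1"
  shows "(\<Sum>s<L. x^(L-s)) \<le> 1/(1-x)"
proof -
  have "(\<Sum>s<L. x^(L-s)) = (\<Sum>s<L. (\<lambda>i. x^(Suc i)) (L - Suc s))"
    by (intro sum.cong) (auto simp: Suc_diff_Suc)
  also have "\<dots> = (\<Sum>i<L. x^(Suc i))" by (rule sum.nat_diff_reindex)
  also have "\<dots> \<le> (\<Sum>i<L. x^i)" using assms by (intro sum_mono) (simp add: mult_left_le_one_le)
  also have "\<dots> \<le> (\<Sum>i. x^i)"
    using assms by (intro sum_le_suminf summable_geometric) auto
  also have "\<dots> = 1/(1-x)" using assms by (simp add: suminf_geometric)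
  finally show ?thesis .
qed

lemma chain_ratio:
  fixes c t :: real
  assumes s: "s \<le> L" and q: "12 \<le> q" and c: "0 < c" and t: "0 < t"
  shows "(2::real)^(L-s) * ((2^s)^q / (c * t * sqrt (2^L) * (3/4)^(L-s))^(2*q))
     \<le> (1/2)^(L-s) / (c^(2*q) * t^(2*q))"
proof -
  have h: "(2::real)^L = 2^s * 2^(L-s)" using s by (simp add: power_add[symmetric])
  have sq: "sqrt ((2::real)^L) ^ (2*q) = (2^L)^q" by (simp add: power_mult real_sqrt_pow2)
  have e: "(c * t * sqrt (2^L) * (3/4)^(L-s))^(2*q) = c^(2*q) * t^(2*q) * (2^L)^q * ((9/16)^q)^(L-s)"
    by (simp add: power_mult_distrib sq power_mult[symmetric] mult.commute[of "L-s"])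
       (simp add: power_mult power_mult_distrib power2_eq_square)
  have r: "((2::real)^s)^q / (2^L)^q = ((1/2)^q)^(L-s)"
    unfolding h by (simp add: power_mult_distrib power_mult[symmetric] mult.commute power_divide)
  have "(2^s)^q / (c * t * sqrt (2^L) * (3/4)^(L-s))^(2*q)
      = (((2::real)^s)^q / (2^L)^q) / ((9/16)^q)^(L-s) / (c^(2*q) * t^(2*q))"
    unfolding e using c t by (simp add: field_simps)
  also have "\<dots> = ((8/9)^q)^(L-s) / (c^(2*q) * t^(2*q))"
    unfolding r by (simp add: power_divide[symmetric] power_mult_distrib[symmetric])
  finally have E: "(2^s)^q / (c * t * sqrt (2^L) * (3/4)^(L-s))^(2*q) = ((8/9)^q)^(L-s) / (c^(2*q) * t^(2*q))" .
  have b: "(8/9::real)^q \<le> 1/4"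
  proof -
    have "(8/9::real)^q \<le> (8/9)^12" using q by (intro power_decreasing) auto
    also have "\<dots> \<le> 1/4" by (simp add: power_divide)
    finally show ?thesis .
  qed
  have "(2::real)^(L-s) * ((8/9)^q)^(L-s) \<le> 2^(L-s) * (1/4)^(L-s)"
    using b by (intro mult_left_mono power_mono) auto
  also have "\<dots> = (1/2)^(L-s)" by (simp add: power_mult_distrib[symmetric])
  finally have "(2::real)^(L-s) * ((8/9)^q)^(L-s) \<le> (1/2)^(L-s)" .
  then show ?thesis unfolding E using c t
    by (simp add: divide_right_mono)
qed


lemma vec_nth_borel: "(\<lambda>x::real^'n. x $ i) \<in> borel_measurable borel"
  by (intro borel_measurable_continuous_onI linear_continuous_on bounded_linear_vec_nth)

lemma measurable_vec_nth_comp[measurable (raw)]: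
  fixes f :: "'a \<Rightarrow> real^'n"
  shows "f \<in> borel_measurable M \<Longrightarrow> (\<lambda>x. f x $ i) \<in> borel_measurable M"
  using measurable_compose[OF _ vec_nth_borel] by blast

lemma grid_alg:
  fixes c cq u v H \<theta> \<eta> :: real
  assumes c: "0 < c" and u: "1 \<le> u" and v: "0 \<le> v" "v \<le> u" and H: "0 < H" and cq: "0 \<le> cq"
    and \<theta>: "\<theta> = 1/2 + \<eta>"
  shows "cq * (v * H)^q / (c * u powr \<theta> * sqrt H)^(2*q) \<le> cq / c^(2*q) * u powr (-(2*real q*\<eta>))"
proof -
  have up: "0 < u" using u by simp
  have e1: "(c * u powr \<theta> * sqrt H)^(2*q) = c^(2*q) * u powr (2*real q*\<theta>) * H^q"
  proof -
    have "(u powr \<theta>)^(2*q) = u powr (2*real q*\<theta>)" using up by (simp add: powr_power mult.commute)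
    moreover have "(sqrt H)^(2*q) = H^q" using H by (simp add: power_mult real_sqrt_pow2)
    ultimately show ?thesis by (simp add: power_mult_distrib)
  qed
  have E: "cq * (v * H)^q / (c * u powr \<theta> * sqrt H)^(2*q) = cq / c^(2*q) * (v^q / u powr (2*real q*\<theta>))"
    unfolding e1 using H c up by (simp add: power_mult_distrib field_simps)
  have "v^q / u powr (2*real q*\<theta>) \<le> u^q / u powr (2*real q*\<theta>)"
    using v up by (intro divide_right_mono power_mono) auto
  also have "u^q / u powr (2*real q*\<theta>) = u powr (-(2*real q*\<eta>))"
  proof -
    have "u^q = u powr (real q)" using up by (simp add: powr_realpow)
    then have "u^q / u powr (2*real q*\<theta>) = u powr (real q - 2*real q*\<theta>)"
      using up by (simp add: powr_diff)
    also have "real q - 2*real q*\<theta> = -(2*real q*\<eta>)" unfolding \<theta> by (simp add: algebra_simps)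
    finally show ?thesis .
  qed
  finally have "v^q / u powr (2*real q*\<theta>) \<le> u powr (-(2*real q*\<eta>))" .
  then have "cq / c^(2*q) * (v^q / u powr (2*real q*\<theta>)) \<le> cq / c^(2*q) * u powr (-(2*real q*\<eta>))"
    by (rule mult_left_mono) (use cq c in auto)
  then show ?thesis unfolding E .
qed

lemma coord_bound:
  fixes W :: "real \<Rightarrow> 'a \<Rightarrow> real^'p" and a :: 'p
  assumes P: "prob_space M" and BM: "std_BM M W" and m1: "1 \<le> m" and L: "m \<le> 2^L" "2^L \<le> 2*m"
    and \<eta>: "0 < \<eta>" and q: "12 \<le> q" "1 < 2*real q*\<eta>" and c: "0 < c"
  shows "measure M {\<omega>\<in>space M. \<exists>n. 5 * sqrt 2 * c * real m powr (-\<eta>) * (real m + real n) powr (1/2+\<eta>)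
            < \<bar>W (real n) \<omega> $ a\<bar>}
     \<le> 3 * (fact (2*q) / (2^q * fact q)) / c^(2*q) * (\<Sum>j. (1 + real j) powr (-(2*real q*\<eta>)))"
proof -
  interpret prob_space M by (rule P)
  have Wm[measurable]: "\<And>t. W t \<in> borel_measurable M" using BM unfolding std_BM_def by auto
  have W0: "\<And>\<omega>. \<omega> \<in> space M \<Longrightarrow> W 0 \<omega> = 0" using BM unfolding std_BM_def by auto
  define cq :: real where "cq = fact (2*q) / (2^q * fact q)"
  have cq0: "0 \<le> cq" unfolding cq_def by simp
  define \<theta> where "\<theta> = 1/2 + \<eta>"
  define h :: nat where "h = 2^L"
  define X where "X n \<omega> = W (real n) \<omega> $ a" for n \<omega>
  have Xm[measurable]: "X n \<in> borel_measurable M" for n unfolding X_def by measurable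
  define tt where "tt j = (1 + real j) powr \<theta>" for j
  have tt0: "0 < tt j" for j unfolding tt_def by simp
  define G where "G j = c * tt j * sqrt (2^L)" for j
  define lam where "lam j s = c * tt j * sqrt (2^L) * (3/4)^(L-s)" for j s
  define Eg where "Eg j = {\<omega>\<in>space M. G j < \<bar>X (j*h) \<omega>\<bar>}" for j
  define Ec where "Ec j s i = {\<omega>\<in>space M. lam j s < \<bar>X (j*h + (i+1)*2^s) \<omega> - X (j*h + i*2^s) \<omega>\<bar>}" for j s i
  define B where "B j = Eg j \<union> (\<Union>s\<in>{..<L}. \<Union>i\<in>{..<2^(L-s)}. Ec j s i)" for j
  define u where "u j = (1 + real j) powr (-(2*real q*\<eta>))" for j
  define bnd where "bnd j = 3 * cq / c^(2*q) * u j" for j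
  have Egm[measurable]: "Eg j \<in> sets M" for j unfolding Eg_def by measurable
  have Ecm[measurable]: "Ec j s i \<in> sets M" for j s i unfolding Ec_def by measurable
  have Bm: "B j \<in> sets M" for j unfolding B_def by measurable
  have u0: "0 \<le> u j" for j unfolding u_def by simp
  have c2q: "0 < c^(2*q)" using c by simp
  (* grid events *)
  have Egb: "measure M (Eg j) \<le> cq / c^(2*q) * u j" for j
  proof (cases "j = 0")
    case True
    have "0 \<le> c * tt 0 * sqrt (2^L)" using c tt0[of 0] by simp
    then have "Eg j = {}" unfolding Eg_def X_def G_def True using W0 by auto
    then show ?thesis using cq0 c2q u0 by simp
  next
    case False
    then have jh: "0 < j * h" unfolding h_def by simp
    have G0: "0 < G j" unfolding G_def using c tt0 by simp
    have "Eg j = {\<omega>\<in>space M. G j < \<bar>W (real (j*h)) \<omega> $ a - W (real 0) \<omega> $ a\<bar>}"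
      unfolding Eg_def X_def using W0 by auto
    then have "measure M (Eg j) \<le> cq * (real (j*h) - real 0)^q / (G j)^(2*q)"
      unfolding cq_def using tail_incr[OF P BM jh G0, of a q] by simp
    also have "\<dots> = cq * (real j * real h)^q / (c * (1 + real j) powr \<theta> * sqrt (real h))^(2*q)"
      unfolding G_def tt_def h_def by simp
    also have "\<dots> \<le> cq / c^(2*q) * u j"
      unfolding u_def by (rule grid_alg[OF c _ _ _ _ cq0 \<theta>_def]) (auto simp: h_def)
    finally show ?thesis .
  qed
  (* chain events *)
  have Ecb: "measure M (Ec j s i) \<le> cq * (2^s)^q / (lam j s)^(2*q)" for j s i
  proof -
    have lp: "0 < lam j s" unfolding lam_def using c tt0 by simp
    have lt: "j*h + i*2^s < j*h + (i+1)*2^s" by simp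
    have "measure M (Ec j s i) \<le> cq * (real (j*h + (i+1)*2^s) - real (j*h + i*2^s))^q / (lam j s)^(2*q)"
      unfolding Ec_def X_def cq_def using tail_incr[OF P BM lt lp, of a q] by simp
    also have "real (j*h + (i+1)*2^s) - real (j*h + i*2^s) = 2^s" by (simp add: algebra_simps)
    finally show ?thesis .
  qed
  have Ecu: "measure M (\<Union>s\<in>{..<L}. \<Union>i\<in>{..<2^(L-s)}. Ec j s i) \<le> 2 * cq / c^(2*q) * u j" for j
  proof -
    have "measure M (\<Union>s\<in>{..<L}. \<Union>i\<in>{..<2^(L-s)}. Ec j s i)
        \<le> (\<Sum>s<L. measure M (\<Union>i\<in>{..<2^(L-s)}. Ec j s i))"
      by (rule measure_UNION_le) auto
    also have "\<dots> \<le> (\<Sum>s<L. (\<Sum>i<(2::nat)^(L-s). measure M (Ec j s i)))"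
      by (intro sum_mono measure_UNION_le) auto
    also have "\<dots> \<le> (\<Sum>s<L. (\<Sum>i<(2::nat)^(L-s). cq * (2^s)^q / (lam j s)^(2*q)))"
      by (intro sum_mono Ecb)
    also have "\<dots> = (\<Sum>s<L. cq * ((2::real)^(L-s) * ((2^s)^q / (lam j s)^(2*q))))"
      by (simp add: algebra_simps)
    also have "\<dots> \<le> (\<Sum>s<L. cq * ((1/2)^(L-s) / (c^(2*q) * (tt j)^(2*q))))"
    proof (intro sum_mono mult_left_mono cq0)
      fix s assume "s \<in> {..<L}"
      then show "(2::real)^(L-s) * ((2^s)^q / (lam j s)^(2*q)) \<le> (1/2)^(L-s) / (c^(2*q) * (tt j)^(2*q))"
        unfolding lam_def by (intro chain_ratio q c tt0) auto
    qed
    also have "\<dots> = cq / (c^(2*q) * (tt j)^(2*q)) * (\<Sum>s<L. (1/2::real)^(L-s))"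
      by (simp add: sum_distrib_left)
    also have "\<dots> \<le> cq / (c^(2*q) * (tt j)^(2*q)) * 2"
      using geo_rev[of "1/2::real" L] cq0 c2q tt0 by (intro mult_left_mono) auto
    also have "cq / (c^(2*q) * (tt j)^(2*q)) \<le> cq / c^(2*q) * u j"
    proof -
      have "(tt j)^(2*q) = (1 + real j) powr (2*real q*\<theta>)"
        unfolding tt_def by (simp add: powr_power mult.commute)
      also have "\<dots> \<ge> (1 + real j) powr (2*real q*\<eta>)"
        unfolding \<theta>_def by (intro powr_mono) (auto simp: mult_left_mono)
      finally have "inverse ((tt j)^(2*q)) \<le> inverse ((1 + real j) powr (2*real q*\<eta>))"
        by (intro le_imp_inverse_le) auto
      then have "inverse ((tt j)^(2*q)) \<le> u j" unfolding u_def by (simp add: powr_minus)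
      then show ?thesis using cq0 c2q
        by (simp add: divide_inverse mult_left_mono mult.assoc)
    qed
    finally show ?thesis by (simp add: algebra_simps)
  qed
  have Bb: "measure M (B j) \<le> bnd j" for j
  proof -
    have "measure M (B j) \<le> measure M (Eg j) + measure M (\<Union>s\<in>{..<L}. \<Union>i\<in>{..<2^(L-s)}. Ec j s i)"
      unfolding B_def by (rule measure_Un_le) auto
    also have "\<dots> \<le> cq / c^(2*q) * u j + 2 * cq / c^(2*q) * u j" by (intro add_mono Egb Ecu)
    finally show ?thesis unfolding bnd_def by simp
  qed
  have su: "summable u"
  proof -
    have "summable (\<lambda>n. real n powr (-(2*real q*\<eta>)))"
      using q by (simp add: summable_real_powr_iff)
    then have "summable (\<lambda>n. real (n + 1) powr (-(2*real q*\<eta>)))"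
      by (rule summable_ignore_initial_segment)
    then show ?thesis unfolding u_def by (simp add: add.commute)
  qed
  have sb: "summable bnd" unfolding bnd_def by (intro summable_mult su)
  have sB: "summable (\<lambda>j. measure M (B j))"
    by (rule summable_comparison_test'[OF sb, of 0]) (use Bb in auto)
  have UB: "measure M (\<Union>j. B j) \<le> (\<Sum>j. bnd j)"
  proof -
    have "measure M (\<Union>j. B j) \<le> (\<Sum>j. measure M (B j))"
      by (rule finite_measure_subadditive_countably) (use Bm sB in auto)
    also have "\<dots> \<le> (\<Sum>j. bnd j)" by (rule suminf_le[OF Bb sB sb])
    finally show ?thesis .
  qed
  have sumb: "(\<Sum>j. bnd j) = 3 * cq / c^(2*q) * (\<Sum>j. u j)"
    unfolding bnd_def by (rule suminf_mult[OF su])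
  (* inclusion *)
  have incl: "{\<omega>\<in>space M. \<exists>n. 5 * sqrt 2 * c * real m powr (-\<eta>) * (real m + real n) powr (1/2+\<eta>)
            < \<bar>W (real n) \<omega> $ a\<bar>} \<subseteq> (\<Union>j. B j)"
  proof (rule subsetI, rule ccontr)
    fix \<omega> assume om: "\<omega> \<in> {\<omega>\<in>space M. \<exists>n. 5 * sqrt 2 * c * real m powr (-\<eta>) * (real m + real n) powr (1/2+\<eta>)
            < \<bar>W (real n) \<omega> $ a\<bar>}" and nB: "\<omega> \<notin> (\<Union>j. B j)"
    from om obtain n where sp: "\<omega> \<in> space M"
      and big: "5 * sqrt 2 * c * real m powr (-\<eta>) * (real m + real n) powr (1/2+\<eta>) < \<bar>X n \<omega>\<bar>"
      unfolding X_def by auto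
    define j where "j = n div h"
    have nBj: "\<omega> \<notin> B j" using nB by auto
    have g: "\<bar>X (n div 2^L * 2^L) \<omega>\<bar> \<le> G j"
      using nBj sp unfolding B_def Eg_def j_def h_def by auto
    have ch: "\<bar>X (n div 2^L * 2^L + (i+1)*2^s) \<omega> - X (n div 2^L * 2^L + i*2^s) \<omega>\<bar> \<le> lam j s"
      if "s < L" "i < 2^(L-s)" for s i
    proof -
      have "\<omega> \<notin> Ec j s i" using nBj that unfolding B_def by auto
      then show ?thesis using sp unfolding Ec_def j_def h_def by auto
    qed
    have "\<bar>X n \<omega>\<bar> \<le> G j + (\<Sum>s<L. lam j s)"
      by (rule block_bound[where X="\<lambda>k. X k \<omega>"]) (use g ch in auto)
    also have "\<dots> = c * tt j * sqrt (2^L) * (1 + (\<Sum>s<L. (3/4::real)^(L-s)))"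
      unfolding G_def lam_def by (simp add: sum_distrib_left algebra_simps)
    also have "\<dots> \<le> c * tt j * sqrt (2^L) * 5"
      using geo_rev[of "3/4::real" L] c tt0[of j] by (intro mult_left_mono) auto
    also have "sqrt (2^L) \<le> sqrt 2 * sqrt (real m)"
    proof -
      have "(2::real)^L \<le> 2 * real m" using L(2) by (metis of_nat_le_iff of_nat_mult of_nat_numeral of_nat_power)
      then have "sqrt ((2::real)^L) \<le> sqrt (2 * real m)" by (rule real_sqrt_le_mono)
      then show ?thesis by (simp add: real_sqrt_mult)
    qed
    then have "c * tt j * sqrt (2^L) * 5 \<le> c * tt j * (sqrt 2 * sqrt (real m)) * 5"
      using c tt0[of j] by (intro mult_right_mono mult_left_mono) auto
    also have "tt j * sqrt (real m) \<le> real m powr (-\<eta>) * (real m + real n) powr (1/2+\<eta>)"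
    proof -
      have mp: "0 < real m" using m1 by simp
      have "sqrt (real m) = real m powr (-\<eta>) * real m powr \<theta>"
        unfolding \<theta>_def using mp by (simp add: powr_add[symmetric] powr_half_sqrt)
      then have "tt j * sqrt (real m) = real m powr (-\<eta>) * (real m * (1 + real j)) powr \<theta>"
        unfolding tt_def using mp by (simp add: powr_mult)
      also have "\<dots> \<le> real m powr (-\<eta>) * (real m + real n) powr \<theta>"
      proof (intro mult_left_mono powr_mono2)
        have "j * m \<le> j * h" using L(1) unfolding h_def by simp
        also have "j * h \<le> n" unfolding j_def by simp
        finally have "real j * real m \<le> real n" by (metis of_nat_le_iff of_nat_mult)
        then show "real m * (1 + real j) \<le> real m + real n" by (simp add: algebra_simps)
      qed (use \<eta> in \<open>auto simp: \<theta>_def\<close>)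
      finally show ?thesis unfolding \<theta>_def .
    qed
    then have "c * tt j * (sqrt 2 * sqrt (real m)) * 5
        \<le> 5 * sqrt 2 * c * (real m powr (-\<eta>) * (real m + real n) powr (1/2+\<eta>))"
      using c by (simp add: algebra_simps mult_left_mono)
    finally show False using big by simp
  qed
  have "measure M {\<omega>\<in>space M. \<exists>n. 5 * sqrt 2 * c * real m powr (-\<eta>) * (real m + real n) powr (1/2+\<eta>)
            < \<bar>W (real n) \<omega> $ a\<bar>} \<le> measure M (\<Union>j. B j)"
    by (rule finite_measure_mono[OF incl]) (use Bm in auto)
  also note UB
  finally show ?thesis unfolding sumb cq_def u_def by simp
qed


lemma summable_shift_powr:
  fixes r :: real assumes "1 < r" shows "summable (\<lambda>j. (1 + real j) powr (-r))"
proof -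
  have "summable (\<lambda>n. real n powr (-r))"
    using assms by (simp add: summable_real_powr_iff)
  then have "summable (\<lambda>n. real (n + 1) powr (-r))"
    by (rule summable_ignore_initial_segment)
  then show ?thesis by (simp add: add.commute)
qed

lemma pow2_between:
  assumes "1 \<le> (m::nat)" shows "\<exists>L. m \<le> 2^L \<and> 2^L \<le> 2*m"
proof -
  have ex: "\<exists>L. m \<le> 2^L" using less_exp[of m] by (meson less_imp_le)
  define L where "L = (LEAST L. m \<le> 2^L)"
  have mL: "m \<le> 2^L" unfolding L_def using ex by (rule LeastI_ex)
  show ?thesis
  proof (cases L)
    case 0 then show ?thesis using mL assms by (intro exI[of _ 0]) auto
  next
    case (Suc K)
    have "K < L" using Suc by simp
    then have "\<not> m \<le> 2^K" unfolding L_def by (rule not_less_Least)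
    then show ?thesis using mL Suc by (intro exI[of _ L]) auto
  qed
qed

lemma BM_bound:
  fixes \<eta> \<delta> :: real
  assumes P: "prob_space M" and \<eta>: "0 < \<eta>" and \<delta>: "0 < \<delta>"
  shows "\<exists>C>0. \<forall>(W::real \<Rightarrow> 'a \<Rightarrow> real^'p) m. std_BM M W \<longrightarrow> 1 \<le> m \<longrightarrow>
      measure M {\<omega>\<in>space M. \<exists>n. C * real m powr (-\<eta>) * (real m + real n) powr (1/2+\<eta>)
            < norm (W (real n) \<omega>)} \<le> \<delta>"
proof -
  interpret prob_space M by (rule P)
  define q where "q = max 12 (nat \<lceil>1/\<eta>\<rceil>)"
  have q12: "12 \<le> q" unfolding q_def by simp
  have "1/\<eta> \<le> real q" unfolding q_def by linarith
  then have "1 \<le> real q * \<eta>" using \<eta> by (simp add: field_simps)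
  then have q2: "1 < 2 * real q * \<eta>" by simp
  define cq :: real where "cq = fact (2*q) / (2^q * fact q)"
  have cq0: "0 \<le> cq" unfolding cq_def by simp
  define Zs where "Zs = (\<Sum>j. (1 + real j) powr (-(2*real q*\<eta>)))"
  have Zs0: "0 \<le> Zs" unfolding Zs_def by (intro suminf_nonneg summable_shift_powr q2) auto
  define p where "p = real CARD('p)"
  have p1: "1 \<le> p" unfolding p_def by simp
  define c where "c = max 1 (3 * cq * Zs * p / \<delta>)"
  have c1: "1 \<le> c" unfolding c_def by simp
  have cc: "c \<le> c^(2*q)" using power_increasing[of 1 "2*q" c] c1 q12 by simp
  have key: "3 * cq / c^(2*q) * Zs \<le> \<delta> / p"
  proof -
    have "3 * cq * Zs * p / \<delta> \<le> c^(2*q)" using cc unfolding c_def by linarith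
    then have "3 * cq * Zs * p \<le> c^(2*q) * \<delta>" using \<delta> by (simp add: divide_le_eq)
    then show ?thesis using p1 c1 \<delta> by (simp add: field_simps)
  qed
  define C where "C = p * (5 * sqrt 2 * c)"
  have C0: "0 < C" unfolding C_def using p1 c1 by simp
  show ?thesis
  proof (intro exI[of _ C] conjI allI impI C0)
    fix W :: "real \<Rightarrow> 'a \<Rightarrow> real^'p" and m :: nat
    assume BM: "std_BM M W" and m1: "1 \<le> m"
    have Wm[measurable]: "\<And>t. W t \<in> borel_measurable M" using BM unfolding std_BM_def by auto
    obtain L where L: "m \<le> 2^L" "2^L \<le> 2*m" using pow2_between[OF m1] by blast
    define b where "b n = 5 * sqrt 2 * c * real m powr (-\<eta>) * (real m + real n) powr (1/2+\<eta>)" for n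
    define A where "A a = {\<omega>\<in>space M. \<exists>n. b n < \<bar>W (real n) \<omega> $ a\<bar>}" for a
    have Am: "A a \<in> sets M" for a
    proof -
      have e: "A a = (\<Union>n. {\<omega>\<in>space M. b n < \<bar>W (real n) \<omega> $ a\<bar>})" unfolding A_def by auto
      have "{\<omega>\<in>space M. b n < \<bar>W (real n) \<omega> $ a\<bar>} \<in> sets M" for n by measurable
      then show ?thesis unfolding e by blast
    qed
    have Ab: "measure M (A a) \<le> \<delta> / p" for a
    proof -
      have "measure M (A a) \<le> 3 * cq / c^(2*q) * Zs"
        unfolding A_def b_def cq_def Zs_def
        by (rule coord_bound[OF P BM m1 L \<eta> q12 q2]) (use c1 in auto)
      then show ?thesis using key by linarith
    qed
    have incl: "{\<omega>\<in>space M. \<exists>n. C * real m powr (-\<eta>) * (real m + real n) powr (1/2+\<eta>)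
            < norm (W (real n) \<omega>)} \<subseteq> (\<Union>a\<in>UNIV. A a)"
    proof (rule subsetI, rule ccontr)
      fix \<omega> assume om: "\<omega> \<in> {\<omega>\<in>space M. \<exists>n. C * real m powr (-\<eta>) * (real m + real n) powr (1/2+\<eta>)
            < norm (W (real n) \<omega>)}" and nA: "\<omega> \<notin> (\<Union>a\<in>UNIV. A a)"
      from om obtain n where sp: "\<omega> \<in> space M"
        and big: "C * real m powr (-\<eta>) * (real m + real n) powr (1/2+\<eta>) < norm (W (real n) \<omega>)" by auto
      have "\<bar>W (real n) \<omega> $ a\<bar> \<le> b n" for a using nA sp unfolding A_def by (auto simp: not_less)
      then have "(\<Sum>a\<in>UNIV. \<bar>W (real n) \<omega> $ a\<bar>) \<le> (\<Sum>a\<in>(UNIV::'p set). b n)"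
        by (intro sum_mono) auto
      then have "norm (W (real n) \<omega>) \<le> (\<Sum>a\<in>(UNIV::'p set). b n)"
        using norm_le_l1_cart[of "W (real n) \<omega>"] by linarith
      also have "\<dots> = C * real m powr (-\<eta>) * (real m + real n) powr (1/2+\<eta>)"
        unfolding b_def C_def p_def by simp
      finally show False using big by simp
    qed
    have "measure M {\<omega>\<in>space M. \<exists>n. C * real m powr (-\<eta>) * (real m + real n) powr (1/2+\<eta>)
            < norm (W (real n) \<omega>)} \<le> measure M (\<Union>a\<in>UNIV. A a)"
      by (rule finite_measure_mono[OF incl]) (use Am in auto)
    also have "\<dots> \<le> (\<Sum>a\<in>UNIV. measure M (A a))" by (rule measure_UNION_le) (use Am in auto)
    also have "\<dots> \<le> (\<Sum>a\<in>(UNIV::'p set). \<delta> / p)" by (intro sum_mono Ab)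
    also have "\<dots> = \<delta>" unfolding p_def by simp
    finally show "measure M {\<omega>\<in>space M. \<exists>n. C * real m powr (-\<eta>) * (real m + real n) powr (1/2+\<eta>)
            < norm (W (real n) \<omega>)} \<le> \<delta>" .
  qed
qed





lemma mv_borel: "(\<lambda>x::real^'n. (A::real^'n^'m) *v x) \<in> borel_measurable borel"
  by (intro borel_measurable_continuous_onI linear_continuous_on matrix_vector_mul_bounded_linear)

lemma measurable_mv_comp[measurable (raw)]:
  fixes f :: "'a \<Rightarrow> real^'n" and A :: "real^'n^'m"
  shows "f \<in> borel_measurable M \<Longrightarrow> (\<lambda>x. A *v f x) \<in> borel_measurable M"
  using measurable_compose[OF _ mv_borel] by blast

theorem lemmaA4:
  fixes M :: "'a measure"
    and Y :: "nat \<Rightarrow> 'a \<Rightarrow> real^'p"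
    and W1 W2 :: "nat \<Rightarrow> real \<Rightarrow> 'a \<Rightarrow> real^'p"
    and \<Sigma> :: "real^'p^'p"
    and Sm :: "nat \<Rightarrow> 'a \<Rightarrow> real^'p^'p"
    and \<xi> \<eta> :: real
  assumes P: "prob_space M"
    and Y_meas: "\<And>i. Y i \<in> borel_measurable M"
    and Y_L2: "\<And>i a. integrable M (\<lambda>\<omega>. (Y i \<omega> $ a)\<^sup>2)"
    and stat: "strictly_stationary M Y"
    and BM: "\<And>m. std_BM M (W1 m)" "\<And>m. std_BM M (W2 m)"
    and BM_indep: "\<And>m. prob_space.indep_var M
        (PiM UNIV (\<lambda>_::real. borel)) (\<lambda>\<omega> t. W1 m t \<omega>)
        (PiM UNIV (\<lambda>_::real. borel)) (\<lambda>\<omega> t. W2 m t \<omega>)"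
    and lr_summable: "summable (\<lambda>i. cov_mat M (Y 1) (Y (i+2)) + cov_mat M (Y (i+2)) (Y 1))"
    and \<Sigma>_def: "\<Sigma> = cov_mat M (Y 1) (Y 1)
        + (\<Sum>i. cov_mat M (Y 1) (Y (i+2)) + cov_mat M (Y (i+2)) (Y 1))"
    and \<Sigma>_pd: "pos_def_mat \<Sigma>"
    and \<xi>: "0 < \<xi>" "\<xi> < 1/2"
    and approx1: "bdd_in_prob M (\<lambda>m \<omega>. SUP k\<in>{m<..}. ereal
        (norm ((\<Sum>i=m+1..k. Y i \<omega> - vexp M (Y 1))
               - mat_sqrt \<Sigma> *v W1 m (real (k - m)) \<omega>) / real (k - m) powr \<xi>))"
    and approx2: "bdd_in_prob M (\<lambda>m \<omega>. ereal
        (norm ((\<Sum>i=1..m. Y i \<omega> - vexp M (Y 1))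
               - mat_sqrt \<Sigma> *v W2 m (real m) \<omega>) / real m powr \<xi>))"
    and Sm_meas: "\<And>m. Sm m \<in> borel_measurable M"
    and Sm_inv: "\<And>m \<omega>. \<omega> \<in> space M \<Longrightarrow> invertible (Sm m \<omega>)"
    and Sm_conv: "conv_in_prob_mat M Sm \<Sigma>"
    and \<eta>: "\<eta> > 0"
  shows "small_in_prob M (\<lambda>m \<omega>. SUP k\<in>{m<..}. ereal
     ((real m / real k) powr (3/2 + \<eta>) *
      \<bar>detector (matrix_inv \<Sigma>) (\<lambda>i. Y i \<omega>) m k
       - detector (matrix_inv (Sm m \<omega>)) (\<lambda>i. Y i \<omega>) m k\<bar>))"
proof -
  interpret prob_space M by (rule P)
  note Y_meas[measurable] Sm_meas[measurable]
  have W1m[measurable]: "\<And>m t. W1 m t \<in> borel_measurable M" using BM(1) unfolding std_BM_def by auto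
  have W2m[measurable]: "\<And>m t. W2 m t \<in> borel_measurable M" using BM(2) unfolding std_BM_def by auto
  define R where "R = mat_sqrt \<Sigma>"
  define \<mu> where "\<mu> = vexp M (Y 1)"
  define A where "A = matrix_inv \<Sigma>"
  define a where "a = onorm ((*v) A) + 1"
  have a0: "0 < a" unfolding a_def using onorm_mv_nonneg[of A] by linarith
  have aA: "onorm ((*v) (matrix_inv \<Sigma>)) \<le> a" unfolding a_def A_def by simp
  define nR where "nR = onorm ((*v) R)"
  have nR0: "0 \<le> nR" unfolding nR_def by (rule onorm_mv_nonneg)
  define p where "p = real CARD('p)"
  have p1: "1 \<le> p" unfolding p_def by simp
  have Sinv: "invertible \<Sigma>" by (rule pd_invertible[OF \<Sigma>_pd])
  define F where "F m \<omega> = (SUP k\<in>{m<..}. ereal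
     ((real m / real k) powr (3/2 + \<eta>) *
      \<bar>detector (matrix_inv \<Sigma>) (\<lambda>i. Y i \<omega>) m k
       - detector (matrix_inv (Sm m \<omega>)) (\<lambda>i. Y i \<omega>) m k\<bar>))" for m \<omega>
  show ?thesis unfolding small_in_prob_def F_def[symmetric]
  proof (intro allI impI)
    fix \<epsilon> :: real assume \<epsilon>: "0 < \<epsilon>"
    show "(\<lambda>m. measure M {\<omega>\<in>space M. ereal \<epsilon> < F m \<omega>}) \<longlonglongrightarrow> 0"
    proof (rule LIMSEQ_I)
      fix \<delta> :: real assume \<delta>: "0 < \<delta>"
      define \<delta>' where "\<delta>' = \<delta> / 6"
      have \<delta>': "0 < \<delta>'" unfolding \<delta>'_def using \<delta> by simp
      obtain CB where CB: "0 < CB" and CBb: "\<And>(W::real \<Rightarrow> 'a \<Rightarrow> real^'p) m. std_BM M W \<Longrightarrow> 1 \<le> m \<Longrightarrow>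
          measure M {\<omega>\<in>space M. \<exists>n. CB * real m powr (-\<eta>) * (real m + real n) powr (1/2+\<eta>)
            < norm (W (real n) \<omega>)} \<le> \<delta>'"
        using BM_bound[OF P \<eta> \<delta>', where 'p='p] by blast
      define X1 where "X1 m \<omega> = (SUP k\<in>{m<..}. ereal
        (norm ((\<Sum>i=m+1..k. Y i \<omega> - vexp M (Y 1))
               - mat_sqrt \<Sigma> *v W1 m (real (k - m)) \<omega>) / real (k - m) powr \<xi>))" for m \<omega>
      define X2 where "X2 m \<omega> = ereal
        (norm ((\<Sum>i=1..m. Y i \<omega> - vexp M (Y 1))
               - mat_sqrt \<Sigma> *v W2 m (real m) \<omega>) / real m powr \<xi>)" for m \<omega>
      obtain C1 N1 where C1: "\<And>m. N1 \<le> m \<Longrightarrow> measure M {\<omega>\<in>space M. ereal C1 < X1 m \<omega>} \<le> \<delta>'"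
        using approx1 \<delta>' unfolding bdd_in_prob_def X1_def by blast
      obtain C2 N2 where C2: "\<And>m. N2 \<le> m \<Longrightarrow> measure M {\<omega>\<in>space M. ereal C2 < X2 m \<omega>} \<le> \<delta>'"
        using approx2 \<delta>' unfolding bdd_in_prob_def X2_def by blast
      define C1' where "C1' = max C1 0"
      define C2' where "C2' = max C2 0"
      define K where "K = nR * CB * 2 powr (1/2+\<eta>) + C2' + nR * CB + C1'"
      have K0: "0 \<le> K" unfolding K_def C1'_def C2'_def using nR0 CB by simp
      define r0 where "r0 = min (1/(2*a)) ((\<epsilon> / (4*K*a + 1))^2)"
      have "0 \<le> 4*K*a" using K0 a0 by simp
      then have pK: "0 < 4*K*a + 1" by simp
      have r0: "0 < r0" unfolding r0_def using a0 \<epsilon> pK by simp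
      define tol where "tol = r0 / (p*p)"
      have tol: "0 < tol" unfolding tol_def using r0 p1 by simp
      have "(\<lambda>m. measure M {\<omega>\<in>space M. norm (Sm m \<omega> - \<Sigma>) > tol}) \<longlonglongrightarrow> 0"
        using Sm_conv tol unfolding conv_in_prob_mat_def by blast
      from LIMSEQ_D[OF this \<delta>'] obtain N3 where
        N3: "\<And>m. N3 \<le> m \<Longrightarrow> norm (measure M {\<omega>\<in>space M. norm (Sm m \<omega> - \<Sigma>) > tol} - 0) < \<delta>'" by blast
      define N where "N = max (max N1 N2) (max N3 1)"
      show "\<exists>no. \<forall>m\<ge>no. norm (measure M {\<omega>\<in>space M. ereal \<epsilon> < F m \<omega>} - 0) < \<delta>"
      proof (intro exI[of _ N] allI impI)
        fix m assume mN: "N \<le> m"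
        have m1: "1 \<le> m" and mN1: "N1 \<le> m" and mN2: "N2 \<le> m" and mN3: "N3 \<le> m"
          using mN unfolding N_def by auto
        define E1 where "E1 = {\<omega>\<in>space M. \<exists>n. CB * real m powr (-\<eta>) * (real m + real n) powr (1/2+\<eta>)
            < norm (W1 m (real n) \<omega>)}"
        define E2 where "E2 = {\<omega>\<in>space M. \<exists>n. CB * real m powr (-\<eta>) * (real m + real n) powr (1/2+\<eta>)
            < norm (W2 m (real n) \<omega>)}"
        define A1 where "A1 = {\<omega>\<in>space M. ereal C1 < X1 m \<omega>}"
        define A2 where "A2 = {\<omega>\<in>space M. ereal C2 < X2 m \<omega>}"
        define A3 where "A3 = {\<omega>\<in>space M. norm (Sm m \<omega> - \<Sigma>) > tol}"
        have E1m: "E1 \<in> sets M"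
        proof -
          have e: "E1 = (\<Union>n. {\<omega>\<in>space M. CB * real m powr (-\<eta>) * (real m + real n) powr (1/2+\<eta>)
            < norm (W1 m (real n) \<omega>)})" unfolding E1_def by auto
          have "{\<omega>\<in>space M. CB * real m powr (-\<eta>) * (real m + real n) powr (1/2+\<eta>)
            < norm (W1 m (real n) \<omega>)} \<in> sets M" for n by measurable
          then show ?thesis unfolding e by blast
        qed
        have E2m: "E2 \<in> sets M"
        proof -
          have e: "E2 = (\<Union>n. {\<omega>\<in>space M. CB * real m powr (-\<eta>) * (real m + real n) powr (1/2+\<eta>)
            < norm (W2 m (real n) \<omega>)})" unfolding E2_def by auto
          have "{\<omega>\<in>space M. CB * real m powr (-\<eta>) * (real m + real n) powr (1/2+\<eta>)
            < norm (W2 m (real n) \<omega>)} \<in> sets M" for n by measurable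
          then show ?thesis unfolding e by blast
        qed
        have X1m: "X1 m \<in> borel_measurable M" unfolding X1_def by measurable
        have X2m: "X2 m \<in> borel_measurable M" unfolding X2_def by measurable
        have A1m: "A1 \<in> sets M" unfolding A1_def using X1m by measurable
        have A2m: "A2 \<in> sets M" unfolding A2_def using X2m by measurable
        have A3m: "A3 \<in> sets M" unfolding A3_def by measurable
        have incl: "{\<omega>\<in>space M. ereal \<epsilon> < F m \<omega>} \<subseteq> E1 \<union> E2 \<union> A1 \<union> A2 \<union> A3"
        proof (rule subsetI, rule ccontr)
          fix \<omega> assume om: "\<omega> \<in> {\<omega>\<in>space M. ereal \<epsilon> < F m \<omega>}" and nU: "\<omega> \<notin> E1 \<union> E2 \<union> A1 \<union> A2 \<union> A3"
          have sp: "\<omega> \<in> space M" and big: "ereal \<epsilon> < F m \<omega>" using om by auto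
          have h3: "norm (W1 m (real n) \<omega>) \<le> CB * real m powr (-\<eta>) * (real m + real n) powr (1/2+\<eta>)" for n
            using nU sp unfolding E1_def by (auto simp: not_less)
          have h4': "norm (W2 m (real n) \<omega>) \<le> CB * real m powr (-\<eta>) * (real m + real n) powr (1/2+\<eta>)" for n
            using nU sp unfolding E2_def by (auto simp: not_less)
          have h4: "norm (W2 m (real m) \<omega>) \<le> CB * real m powr (-\<eta>) * (real m + real m) powr (1/2+\<eta>)"
            by (rule h4'[of m])
          have X1b: "X1 m \<omega> \<le> ereal C1" using nU sp unfolding A1_def by (auto simp: not_less)
          have X2b: "X2 m \<omega> \<le> ereal C2" using nU sp unfolding A2_def by (auto simp: not_less)
          have Sb: "norm (Sm m \<omega> - \<Sigma>) \<le> tol" using nU sp unfolding A3_def by (auto simp: not_less)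
          have h1: "norm ((\<Sum>i=m+1..k. Y i \<omega> - \<mu>) - R *v W1 m (real (k - m)) \<omega>) / real (k - m) powr \<xi> \<le> C1'"
            if "m < k" for k
          proof -
            have "ereal (norm ((\<Sum>i=m+1..k. Y i \<omega> - vexp M (Y 1))
               - mat_sqrt \<Sigma> *v W1 m (real (k - m)) \<omega>) / real (k - m) powr \<xi>) \<le> X1 m \<omega>"
              unfolding X1_def using that by (intro SUP_upper) auto
            then have "ereal (norm ((\<Sum>i=m+1..k. Y i \<omega> - vexp M (Y 1))
               - mat_sqrt \<Sigma> *v W1 m (real (k - m)) \<omega>) / real (k - m) powr \<xi>) \<le> ereal C1"
              using X1b by (rule order_trans)
            then have "norm ((\<Sum>i=m+1..k. Y i \<omega> - vexp M (Y 1))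
               - mat_sqrt \<Sigma> *v W1 m (real (k - m)) \<omega>) / real (k - m) powr \<xi> \<le> C1"
              by (simp only: ereal_less_eq)
            then show ?thesis unfolding C1'_def \<mu>_def R_def by simp
          qed
          have h2: "norm ((\<Sum>i=1..m. Y i \<omega> - \<mu>) - R *v W2 m (real m) \<omega>) / real m powr \<xi> \<le> C2'"
            using X2b unfolding X2_def C2'_def \<mu>_def R_def by simp
          have T: "norm (\<Sum>l=1..i. Y l \<omega> - \<mu>) \<le> K * real m powr (-\<eta>) * real i powr (1/2+\<eta>)"
            if "m \<le> i" for i
            unfolding K_def nR_def
            by (rule partial_bound[OF m1 \<eta> \<xi>(1) \<xi>(2) _ _ _ _ h1 h2 h3 h4 that])
               (use CB in \<open>auto simp: C1'_def C2'_def\<close>)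
          define d where "d = p * p * norm (Sm m \<omega> - \<Sigma>)"
          have d0: "0 \<le> d" unfolding d_def using p1 by simp
          have dr: "d \<le> r0" unfolding d_def using Sb p1 unfolding tol_def
            by (simp add: field_simps mult_left_mono)
          have dS: "onorm ((*v) (Sm m \<omega> - \<Sigma>)) \<le> d" unfolding d_def p_def by (rule onorm_le_norm)
          have ad: "a * d \<le> 1/2"
          proof -
            have "a * d \<le> a * (1/(2*a))" using dr a0 unfolding r0_def by (intro mult_left_mono) auto
            then show ?thesis using a0 by simp
          qed
          have W: "\<bar>wnorm (matrix_inv \<Sigma>) v - wnorm (matrix_inv (Sm m \<omega>)) v\<bar> \<le> (2 * a * sqrt d) * norm v" for v
            using wnorm_diff[OF Sinv Sm_inv[OF sp] aA dS ad] by simp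
          have fin: "2 * K * (2 * a * sqrt d) \<le> \<epsilon>"
          proof -
            have "sqrt d \<le> sqrt ((\<epsilon> / (4*K*a + 1))^2)" using dr unfolding r0_def by (intro real_sqrt_le_mono) auto
            also have "\<dots> = \<epsilon> / (4*K*a + 1)" using \<epsilon> pK by simp
            finally have sd: "sqrt d \<le> \<epsilon> / (4*K*a + 1)" .
            have "2 * K * (2 * a * sqrt d) = (4*K*a) * sqrt d" by simp
            also have "\<dots> \<le> (4*K*a) * (\<epsilon> / (4*K*a + 1))" using sd K0 a0 by (intro mult_left_mono) auto
            also have "\<dots> \<le> \<epsilon>" using K0 a0 \<epsilon> pK by (simp add: divide_le_eq field_simps)
            finally show ?thesis .
          qed
          have "F m \<omega> \<le> ereal \<epsilon>"
            unfolding F_def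
          proof (rule SUP_least)
            fix k assume "k \<in> {m<..}"
            then have mk: "m < k" by simp
            have "(real m / real k) powr (3/2 + \<eta>) *
                 \<bar>detector (matrix_inv \<Sigma>) (\<lambda>i. Y i \<omega>) m k - detector (matrix_inv (Sm m \<omega>)) (\<lambda>i. Y i \<omega>) m k\<bar>
                 \<le> 2 * K * (2 * a * sqrt d)"
              by (rule detector_diff[OF m1 mk _ K0 \<eta> T W]) (use a0 d0 in auto)
            then show "ereal ((real m / real k) powr (3/2 + \<eta>) *
                 \<bar>detector (matrix_inv \<Sigma>) (\<lambda>i. Y i \<omega>) m k - detector (matrix_inv (Sm m \<omega>)) (\<lambda>i. Y i \<omega>) m k\<bar>)
                 \<le> ereal \<epsilon>" using fin by simp
          qed
          then show False using big by simp
        qed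
        have "measure M {\<omega>\<in>space M. ereal \<epsilon> < F m \<omega>} \<le> measure M (E1 \<union> E2 \<union> A1 \<union> A2 \<union> A3)"
          by (rule finite_measure_mono[OF incl]) (use E1m E2m A1m A2m A3m in auto)
        also have "\<dots> \<le> measure M E1 + measure M E2 + measure M A1 + measure M A2 + measure M A3"
          using E1m E2m A1m A2m A3m
          by (smt (verit) measure_Un_le sets.Un)
        also have "\<dots> < \<delta>' + \<delta>' + \<delta>' + \<delta>' + \<delta>'"
        proof -
          have "measure M E1 \<le> \<delta>'" unfolding E1_def by (rule CBb[OF BM(1) m1])
          moreover have "measure M E2 \<le> \<delta>'" unfolding E2_def by (rule CBb[OF BM(2) m1])
          moreover have "measure M A1 \<le> \<delta>'" unfolding A1_def by (rule C1[OF mN1])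
          moreover have "measure M A2 \<le> \<delta>'" unfolding A2_def by (rule C2[OF mN2])
          moreover have "measure M A3 < \<delta>'" using N3[OF mN3] unfolding A3_def by simp
          ultimately show ?thesis by linarith
        qed
        also have "\<dots> < \<delta>" unfolding \<delta>'_def using \<delta> by simp
        finally show "norm (measure M {\<omega>\<in>space M. ereal \<epsilon> < F m \<omega>} - 0) < \<delta>" by simp
      qed
    qed
  qed
qed


end
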